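(* Let $\mathcal T$ be an orbital category. The monotone map $\upsilon:\mathrm{wIndSys}_{\mathcal T}\to\mathrm{Fam}_{\mathcal T}$ has a fully faithful left adjoint given by $\mathcal F\mapsto E^{\mathcal T}_{\mathcal F}\underline{\mathbb F}^0_{\mathcal F}$, the $\mathcal T$-weak indexing system whose $V$-value is $\{\emptyset_V,*_V\}$ (up to isomorphism) for $V\in\mathcal F$ and $\emptyset$ otherwise.
   Context: For a small category $\mathcal T$, $\mathbb F_{\mathcal T}$ is the full subcategory of $\mathrm{Fun}(\mathcal T^{op},\mathrm{Set})$ on finite coproducts of representables; $\mathcal T$ is orbital if $\mathbb F_{\mathcal T}$ has pullbacks. $\mathbb F_V:=\mathbb F_{\mathcal T,/V}$, $*_V$ terminal, $\emptyset_V$ initial; for $U\to V$, $\mathrm{Res}^V_U$ is pullback and $\mathrm{Ind}^V_U$ postcomposition. A full $\mathcal T$-subcategory assigns isomorphism-closed classes $\mathcal C_V\subseteq\mathrm{Ob}\,\mathbb F_V$ stable under restriction. For $S\in\mathbb F_V$ with orbits $U$ and $T_U\in\mathbb F_U$, $\coprod_U^ST_U:=\coprod_U\mathrm{Ind}_U^VT_U$. A $\mathcal T$-weak indexing system is a full $\mathcal T$-subcategory with $\mathcal C_V\neq\emptyset\Rightarrow *_V\in\mathcal C_V$ and closed under $\coprod^S_UT_U$ for $S\in\mathcal C_V$, $T_U\in\mathcal C_U$; $\mathrm{wIndSys}_{\mathcal T}$ is their poset under inclusion. A $\mathcal T$-family is a full subcategory $\mathcal F$ with $V\to W$, $W\in\mathcal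 F\Rightarrow V\in\mathcal F$; $\mathrm{Fam}_{\mathcal T}$ their poset. $\upsilon(\mathcal C)=\{V\mid\emptyset_V\in\mathcal C_V\}$. A monotone map $L$ is left adjoint to $\pi$ if $L(x)\le y\iff x\le\pi(y)$; fully faithful means order-reflecting. *)

theory Defs
  imports Main
begin

text \<open>A small category T: object set, hom-sets, identities, composition
  (cComp T g f is "g after f").\<close>
record ('o,'m) cat =
  cOb :: "'o set"
  cHom :: "'o \<Rightarrow> 'o \<Rightarrow> 'm set"
  cId :: "'o \<Rightarrow> 'm"
  cComp :: "'m \<Rightarrow> 'm \<Rightarrow> 'm"

definition is_category :: "('o,'m) cat \<Rightarrow> bool" where
  "is_category T \<equiv>
     (\<forall>a b f. f \<in> cHom T a b \<longrightarrow> a \<in> cOb T \<and> b \<in> cOb T) \<and>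
     (\<forall>a\<in>cOb T. cId T a \<in> cHom T a a) \<and>
     (\<forall>a b c f g. f \<in> cHom T a b \<longrightarrow> g \<in> cHom T b c \<longrightarrow> cComp T g f \<in> cHom T a c) \<and>
     (\<forall>a b c d f g h. f \<in> cHom T a b \<longrightarrow> g \<in> cHom T b c \<longrightarrow> h \<in> cHom T c d \<longrightarrow>
        cComp T h (cComp T g f) = cComp T (cComp T h g) f) \<and>
     (\<forall>a b f. f \<in> cHom T a b \<longrightarrow> cComp T (cId T b) f = f \<and> cComp T f (cId T a) = f)"

text \<open>The category F_T of finite coproducts of representables, modelled (via Yoneda)
  as the free finite-coproduct completion of T: an object is a finite list of objects
  of T (the orbits), a morphism A \<rightarrow> B is an index map phi together with T-morphisms
  A!i \<rightarrow> B!(phi i).\<close>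
definition ft_obj :: "('o,'m) cat \<Rightarrow> 'o list \<Rightarrow> bool" where
  "ft_obj T A \<equiv> set A \<subseteq> cOb T"

definition ft_hom :: "('o,'m) cat \<Rightarrow> 'o list \<Rightarrow> 'o list \<Rightarrow> (nat \<Rightarrow> nat) \<times> (nat \<Rightarrow> 'm) \<Rightarrow> bool" where
  "ft_hom T A B h \<equiv> \<forall>i<length A. fst h i < length B \<and> snd h i \<in> cHom T (A!i) (B!(fst h i))"

definition ft_eq :: "'o list \<Rightarrow> (nat \<Rightarrow> nat) \<times> (nat \<Rightarrow> 'm) \<Rightarrow> (nat \<Rightarrow> nat) \<times> (nat \<Rightarrow> 'm) \<Rightarrow> bool" where
  "ft_eq A h k \<equiv> \<forall>i<length A. fst h i = fst k i \<and> snd h i = snd k i"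

definition ft_comp :: "('o,'m) cat \<Rightarrow> (nat \<Rightarrow> nat) \<times> (nat \<Rightarrow> 'm) \<Rightarrow> (nat \<Rightarrow> nat) \<times> (nat \<Rightarrow> 'm)
    \<Rightarrow> (nat \<Rightarrow> nat) \<times> (nat \<Rightarrow> 'm)" where
  "ft_comp T k h = (fst k \<circ> fst h, \<lambda>i. cComp T (snd k (fst h i)) (snd h i))"

definition ft_id :: "('o,'m) cat \<Rightarrow> 'o list \<Rightarrow> (nat \<Rightarrow> nat) \<times> (nat \<Rightarrow> 'm)" where
  "ft_id T A = (\<lambda>i. i, \<lambda>i. cId T (A!i))"

definition is_pullback :: "('o,'m) cat \<Rightarrow> 'o list \<Rightarrow> 'o list \<Rightarrow> 'o list
    \<Rightarrow> (nat \<Rightarrow> nat) \<times> (nat \<Rightarrow> 'm) \<Rightarrow> (nat \<Rightarrow> nat) \<times> (nat \<Rightarrow> 'm)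
    \<Rightarrow> 'o list \<Rightarrow> (nat \<Rightarrow> nat) \<times> (nat \<Rightarrow> 'm) \<Rightarrow> (nat \<Rightarrow> nat) \<times> (nat \<Rightarrow> 'm) \<Rightarrow> bool" where
  "is_pullback T A B C f g P p q \<equiv>
     ft_obj T P \<and> ft_hom T P A p \<and> ft_hom T P B q \<and>
     ft_eq P (ft_comp T f p) (ft_comp T g q) \<and>
     (\<forall>Q a b. ft_obj T Q \<and> ft_hom T Q A a \<and> ft_hom T Q B b \<and>
        ft_eq Q (ft_comp T f a) (ft_comp T g b) \<longrightarrow>
        (\<exists>h. ft_hom T Q P h \<and> ft_eq Q (ft_comp T p h) a \<and> ft_eq Q (ft_comp T q h) b \<and>
           (\<forall>h'. ft_hom T Q P h' \<and> ft_eq Q (ft_comp T p h') a \<and> ft_eq Q (ft_comp T q h') b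
                 \<longrightarrow> ft_eq Q h h')))"

definition orbital :: "('o,'m) cat \<Rightarrow> bool" where
  "orbital T \<equiv> is_category T \<and>
     (\<forall>A B C f g. ft_obj T A \<and> ft_obj T B \<and> ft_obj T C \<and> ft_hom T A C f \<and> ft_hom T B C g
        \<longrightarrow> (\<exists>P p q. is_pullback T A B C f g P p q))"

text \<open>The slice F_V = F_{T,/V}: an object is a list of orbits U_i with structure maps
  U_i \<rightarrow> V.\<close>
definition sl_obj :: "('o,'m) cat \<Rightarrow> 'o \<Rightarrow> ('o \<times> 'm) list \<Rightarrow> bool" where
  "sl_obj T V S \<equiv> \<forall>x\<in>set S. fst x \<in> cOb T \<and> snd x \<in> cHom T (fst x) V"

text \<open>structure map of S, as an F_T-morphism  map fst S \<rightarrow> [V]\<close>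
definition sl_str :: "('o \<times> 'm) list \<Rightarrow> (nat \<Rightarrow> nat) \<times> (nat \<Rightarrow> 'm)" where
  "sl_str S = (\<lambda>_. 0, \<lambda>i. snd (S!i))"

definition sl_hom :: "('o,'m) cat \<Rightarrow> ('o \<times> 'm) list \<Rightarrow> ('o \<times> 'm) list
    \<Rightarrow> (nat \<Rightarrow> nat) \<times> (nat \<Rightarrow> 'm) \<Rightarrow> bool" where
  "sl_hom T S S' h \<equiv> ft_hom T (map fst S) (map fst S') h \<and>
     (\<forall>i<length S. cComp T (snd (S'!(fst h i))) (snd h i) = snd (S!i))"

definition sl_iso :: "('o,'m) cat \<Rightarrow> 'o \<Rightarrow> ('o \<times> 'm) list \<Rightarrow> ('o \<times> 'm) list \<Rightarrow> bool" where
  "sl_iso T V S S' \<equiv> sl_obj T V S \<and> sl_obj T V S' \<and>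
     (\<exists>h k. sl_hom T S S' h \<and> sl_hom T S' S k \<and>
        ft_eq (map fst S) (ft_comp T k h) (ft_id T (map fst S)) \<and>
        ft_eq (map fst S') (ft_comp T h k) (ft_id T (map fst S')))"

text \<open>R is (a choice of) Res^V_U S along u : U \<rightarrow> V, i.e. a pullback of S \<rightarrow> V along U \<rightarrow> V.\<close>
definition is_res :: "('o,'m) cat \<Rightarrow> 'm \<Rightarrow> 'o \<Rightarrow> 'o \<Rightarrow> ('o \<times> 'm) list \<Rightarrow> ('o \<times> 'm) list \<Rightarrow> bool" where
  "is_res T u U V S R \<equiv> u \<in> cHom T U V \<and> sl_obj T V S \<and> sl_obj T U R \<and>
     (\<exists>q. is_pullback T (map fst S) [U] [V] (sl_str S) (\<lambda>_. 0, \<lambda>_. u) (map fst R) q (sl_str R))"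

definition full_sub :: "('o,'m) cat \<Rightarrow> ('o \<Rightarrow> ('o \<times> 'm) list set) \<Rightarrow> bool" where
  "full_sub T C \<equiv>
     (\<forall>V. V \<notin> cOb T \<longrightarrow> C V = {}) \<and>
     (\<forall>V\<in>cOb T. \<forall>S\<in>C V. sl_obj T V S) \<and>
     (\<forall>V\<in>cOb T. \<forall>S S'. S \<in> C V \<and> sl_iso T V S S' \<longrightarrow> S' \<in> C V) \<and>
     (\<forall>U V u S R. is_res T u U V S R \<and> S \<in> C V \<longrightarrow> R \<in> C U)"

text \<open>coprod^S_U T_U = coprod_U Ind^V_U T_U, where Ts i lies over the i-th orbit of S.\<close>
definition indcoprod :: "('o,'m) cat \<Rightarrow> ('o \<times> 'm) list \<Rightarrow> (nat \<Rightarrow> ('o \<times> 'm) list) \<Rightarrow> ('o \<times> 'm) list" where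
  "indcoprod T S Ts = concat (map (\<lambda>i. map (\<lambda>x. (fst x, cComp T (snd (S!i)) (snd x))) (Ts i)) [0..<length S])"

definition wIndSys :: "('o,'m) cat \<Rightarrow> ('o \<Rightarrow> ('o \<times> 'm) list set) \<Rightarrow> bool" where
  "wIndSys T C \<equiv> full_sub T C \<and>
     (\<forall>V\<in>cOb T. C V \<noteq> {} \<longrightarrow> [(V, cId T V)] \<in> C V) \<and>
     (\<forall>V\<in>cOb T. \<forall>S Ts. S \<in> C V \<and> (\<forall>i<length S. Ts i \<in> C (fst (S!i))) \<longrightarrow> indcoprod T S Ts \<in> C V)"

definition family :: "('o,'m) cat \<Rightarrow> 'o set \<Rightarrow> bool" where
  "family T F \<equiv> F \<subseteq> cOb T \<and> (\<forall>V W f. f \<in> cHom T V W \<and> W \<in> F \<longrightarrow> V \<in> F)"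

definition upsilon :: "('o,'m) cat \<Rightarrow> ('o \<Rightarrow> ('o \<times> 'm) list set) \<Rightarrow> 'o set" where
  "upsilon T C = {V \<in> cOb T. [] \<in> C V}"

definition EF :: "('o,'m) cat \<Rightarrow> 'o set \<Rightarrow> 'o \<Rightarrow> ('o \<times> 'm) list set" where
  "EF T F = (\<lambda>V. if V \<in> F then {S. sl_iso T V S [] \<or> sl_iso T V S [(V, cId T V)]} else {})"

end

theory Submission
  imports Defs
begin

lemma catD:
  assumes "is_category T"
  shows cat_dom: "\<And>a b f. f \<in> cHom T a b \<Longrightarrow> a \<in> cOb T \<and> b \<in> cOb T"
  and cat_id: "\<And>a. a \<in> cOb T \<Longrightarrow> cId T a \<in> cHom T a a"
  and cat_comp: "\<And>a b c f g. f \<in> cHom T a b \<Longrightarrow> g \<in> cHom T b c \<Longrightarrow> cComp T g f \<in> cHom T a c"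
  and cat_assoc: "\<And>a b c d f g h. f \<in> cHom T a b \<Longrightarrow> g \<in> cHom T b c \<Longrightarrow> h \<in> cHom T c d \<Longrightarrow>
        cComp T h (cComp T g f) = cComp T (cComp T h g) f"
  and cat_idl: "\<And>a b f. f \<in> cHom T a b \<Longrightarrow> cComp T (cId T b) f = f"
  and cat_idr: "\<And>a b f. f \<in> cHom T a b \<Longrightarrow> cComp T f (cId T a) = f"
  using assms unfolding is_category_def by blast+

lemma sl_iso_sym: "sl_iso T V S S' \<Longrightarrow> sl_iso T V S' S"
  unfolding sl_iso_def by blast

lemma sl_iso_nil: "sl_iso T V S [] \<longleftrightarrow> S = []"
proof
  assume "sl_iso T V S []"
  then obtain h where "sl_hom T S [] h" unfolding sl_iso_def by blast
  then show "S = []" unfolding sl_hom_def ft_hom_def by (cases S) auto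
next
  assume "S = []" then show "sl_iso T V S []"
    unfolding sl_iso_def sl_obj_def sl_hom_def ft_hom_def ft_eq_def by auto
qed

lemma sl_homD:
  assumes "sl_hom T S S' h" "i < length S"
  shows "fst h i < length S'" "snd h i \<in> cHom T (fst (S!i)) (fst (S'!(fst h i)))"
    "cComp T (snd (S'!(fst h i))) (snd h i) = snd (S!i)"
  using assms unfolding sl_hom_def ft_hom_def by auto

lemma sl_hom_comp:
  assumes c: "is_category T" and h: "sl_hom T S S' h" and h': "sl_hom T S' S'' h'"
  and o: "sl_obj T V S''"
  shows "sl_hom T S S'' (ft_comp T h' h)"
proof -
  have *: "fst (ft_comp T h' h) i < length S'' \<and>
     snd (ft_comp T h' h) i \<in> cHom T (fst (S!i)) (fst (S''!(fst (ft_comp T h' h) i))) \<and>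
     cComp T (snd (S''!(fst (ft_comp T h' h) i))) (snd (ft_comp T h' h) i) = snd (S!i)"
    if i: "i < length S" for i
  proof -
    note a = sl_homD[OF h i]
    note b = sl_homD[OF h' a(1)]
    have s: "snd (S''!(fst h' (fst h i))) \<in> cHom T (fst (S''!(fst h' (fst h i)))) V"
      using o b(1) unfolding sl_obj_def by auto
    show ?thesis using a b s
      by (simp add: ft_comp_def cat_comp[OF c] cat_assoc[OF c])
  qed
  show ?thesis unfolding sl_hom_def ft_hom_def using * by simp
qed

lemma ft_eq_comp:
  assumes c: "is_category T" and h: "sl_hom T S S' h" and h': "sl_hom T S' S'' h'"
  and k': "sl_hom T S'' S' k'" and k: "sl_hom T S' S k"
  and e1: "ft_eq (map fst S') (ft_comp T k' h') (ft_id T (map fst S'))"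
  and e2: "ft_eq (map fst S) (ft_comp T k h) (ft_id T (map fst S))"
  shows "ft_eq (map fst S) (ft_comp T (ft_comp T k k') (ft_comp T h' h)) (ft_id T (map fst S))"
  unfolding ft_eq_def
proof (intro allI impI)
  fix i assume i0: "i < length (map fst S)"
  hence i: "i < length S" by simp
  note a = sl_homD[OF h i]
  note b = sl_homD[OF h' a(1)]
  note d = sl_homD[OF k' b(1)]
  have E1: "fst k' (fst h' (fst h i)) = fst h i" "cComp T (snd k' (fst h' (fst h i))) (snd h' (fst h i)) = cId T (fst (S' ! fst h i))"
    using e1 a(1) unfolding ft_eq_def ft_comp_def ft_id_def by auto
  note e = sl_homD[OF k a(1)]
  have E2: "fst k (fst h i) = i" "cComp T (snd k (fst h i)) (snd h i) = cId T (fst (S ! i))"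
    using e2 i unfolding ft_eq_def ft_comp_def ft_id_def by auto
  have "cComp T (cComp T (snd k (fst h i)) (snd k' (fst h' (fst h i)))) (cComp T (snd h' (fst h i)) (snd h i))
     = cComp T (snd k (fst h i)) (cComp T (cComp T (snd k' (fst h' (fst h i))) (snd h' (fst h i))) (snd h i))"
  proof -
    have x1: "cComp T (cComp T (snd k (fst h i)) (snd k' (fst h' (fst h i)))) (cComp T (snd h' (fst h i)) (snd h i))
      = cComp T (snd k (fst h i)) (cComp T (snd k' (fst h' (fst h i))) (cComp T (snd h' (fst h i)) (snd h i)))"
      using cat_assoc[OF c cat_comp[OF c a(2) b(2)] d(2)[unfolded E1(1)] e(2), symmetric] by (simp only:)
    have x2: "cComp T (snd k' (fst h' (fst h i))) (cComp T (snd h' (fst h i)) (snd h i)) =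
       cComp T (cComp T (snd k' (fst h' (fst h i))) (snd h' (fst h i))) (snd h i)"
      using cat_assoc[OF c a(2) b(2) d(2)] by (simp only:)
    show ?thesis using x1 x2 by (simp only:)
  qed
  also have "\<dots> = cComp T (snd k (fst h i)) (cComp T (cId T (fst (S' ! fst h i))) (snd h i))"
    by (simp only: E1(2))
  also have "\<dots> = cComp T (snd k (fst h i)) (snd h i)" using cat_idl[OF c a(2)] by (simp only:)
  also have "\<dots> = cId T (fst (S ! i))" using E2(2) .
  finally have X: "cComp T (cComp T (snd k (fst h i)) (snd k' (fst h' (fst h i)))) (cComp T (snd h' (fst h i)) (snd h i)) = cId T (fst (S ! i))" .
  show "fst (ft_comp T (ft_comp T k k') (ft_comp T h' h)) i = fst (ft_id T (map fst S)) i \<and>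
         snd (ft_comp T (ft_comp T k k') (ft_comp T h' h)) i = snd (ft_id T (map fst S)) i"
    unfolding ft_comp_def ft_id_def using E1(1) E2(1) X i by simp
qed

lemma sl_iso_trans:
  assumes c: "is_category T" and 1: "sl_iso T V S S'" and 2: "sl_iso T V S' S''"
  shows "sl_iso T V S S''"
proof -
  obtain h k where hk: "sl_hom T S S' h" "sl_hom T S' S k"
    "ft_eq (map fst S) (ft_comp T k h) (ft_id T (map fst S))"
    "ft_eq (map fst S') (ft_comp T h k) (ft_id T (map fst S'))" and o: "sl_obj T V S" "sl_obj T V S'"
    using 1 unfolding sl_iso_def by blast
  obtain h' k' where hk': "sl_hom T S' S'' h'" "sl_hom T S'' S' k'"
    "ft_eq (map fst S') (ft_comp T k' h') (ft_id T (map fst S'))"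
    "ft_eq (map fst S'') (ft_comp T h' k') (ft_id T (map fst S''))" and o': "sl_obj T V S''"
    using 2 unfolding sl_iso_def by blast
  have a: "sl_hom T S S'' (ft_comp T h' h)" using sl_hom_comp[OF c hk(1) hk'(1) o'] .
  have b: "sl_hom T S'' S (ft_comp T k k')" using sl_hom_comp[OF c hk'(2) hk(2) o(1)] .
  have d: "ft_eq (map fst S) (ft_comp T (ft_comp T k k') (ft_comp T h' h)) (ft_id T (map fst S))"
    using ft_eq_comp[OF c hk(1) hk'(1) hk'(2) hk(2) hk'(3) hk(3)] .
  have e: "ft_eq (map fst S'') (ft_comp T (ft_comp T h' h) (ft_comp T k k')) (ft_id T (map fst S''))"
    using ft_eq_comp[OF c hk'(2) hk(2) hk(1) hk'(1) hk(4) hk'(4)] .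
  show ?thesis unfolding sl_iso_def using o o' a b d e by blast
qed

definition isoV where
  "isoV T U V u \<equiv> (\<exists>u'. u \<in> cHom T U V \<and> u' \<in> cHom T V U \<and> cComp T u u' = cId T V \<and> cComp T u' u = cId T U)"

lemma sl_iso_star:
  assumes c: "is_category T"
  shows "sl_iso T V S [(V, cId T V)] \<longleftrightarrow> (\<exists>U u. S = [(U,u)] \<and> isoV T U V u)"
proof
  assume "sl_iso T V S [(V, cId T V)]"
  then obtain h k where hk: "sl_hom T S [(V, cId T V)] h" "sl_hom T [(V, cId T V)] S k"
    "ft_eq (map fst S) (ft_comp T k h) (ft_id T (map fst S))"
    "ft_eq [V] (ft_comp T h k) (ft_id T [V])"
    unfolding sl_iso_def by auto
  note k0 = sl_homD[OF hk(2), of 0, simplified]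
  have eqk: "i = fst k 0" if i: "i < length S" for i
  proof -
    have "fst h i = 0" using sl_homD(1)[OF hk(1) i] by simp
    moreover have "fst k (fst h i) = i" using hk(3) i unfolding ft_eq_def ft_comp_def ft_id_def by auto
    ultimately show ?thesis by simp
  qed
  have "length S = 1"
  proof -
    have "length S > 0" using k0(1) by linarith
    moreover have "\<not> length S \<ge> 2"
    proof
      assume "length S \<ge> 2" then have "0 < length S" "1 < length S" by auto
      then show False using eqk[of 0] eqk[of 1] by auto
    qed
    ultimately show ?thesis by linarith
  qed
  then obtain U u where S: "S = [(U,u)]" by (metis (no_types, opaque_lifting) One_nat_def length_0_conv length_Suc_conv old.prod.exhaust)
  have fk: "fst k 0 = 0" using k0(1) S by simp
  have fh: "fst h 0 = 0" using sl_homD(1)[OF hk(1), of 0] S by simp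
  note h0 = sl_homD[OF hk(1), of 0, unfolded S fh, simplified]
  note k0' = k0[unfolded S fk, simplified]
  have hu: "snd h 0 = u" using h0 cat_idl[OF c] by metis
  have e: "cComp T (snd k 0) (snd h 0) = cId T U"
    using hk(3) S fh unfolding ft_eq_def ft_comp_def ft_id_def by auto
  show "\<exists>U u. S = [(U,u)] \<and> isoV T U V u"
    unfolding isoV_def using S h0 k0' hu e by auto
next
  assume "\<exists>U u. S = [(U,u)] \<and> isoV T U V u"
  then obtain U u u' where S: "S = [(U,u)]" and u: "u \<in> cHom T U V" "u' \<in> cHom T V U"
    "cComp T u u' = cId T V" "cComp T u' u = cId T U" unfolding isoV_def by blast
  have ob: "U \<in> cOb T" "V \<in> cOb T" using cat_dom[OF c u(1)] by auto
  have "sl_hom T S [(V, cId T V)] (\<lambda>_. 0, \<lambda>_. u)"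
    unfolding sl_hom_def ft_hom_def using S u cat_idl[OF c u(1)] by simp
  moreover have "sl_hom T [(V, cId T V)] S (\<lambda>_. 0, \<lambda>_. u')"
    unfolding sl_hom_def ft_hom_def using S u by simp
  moreover have "ft_eq (map fst S) (ft_comp T (\<lambda>_. 0, \<lambda>_. u') (\<lambda>_. 0, \<lambda>_. u)) (ft_id T (map fst S))"
    unfolding ft_eq_def ft_comp_def ft_id_def using S u by simp
  moreover have "ft_eq (map fst [(V, cId T V)]) (ft_comp T (\<lambda>_. 0, \<lambda>_. u) (\<lambda>_. 0, \<lambda>_. u')) (ft_id T (map fst [(V, cId T V)]))"
    unfolding ft_eq_def ft_comp_def ft_id_def using S u by simp
  moreover have "sl_obj T V S" "sl_obj T V [(V, cId T V)]"
    unfolding sl_obj_def using S u ob cat_id[OF c] by auto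
  ultimately show "sl_iso T V S [(V, cId T V)]" unfolding sl_iso_def by blast
qed

lemma pb_unique:
  assumes "is_pullback T A B C f g P p q" "ft_obj T Q" "ft_hom T Q A a" "ft_hom T Q B b"
    "ft_eq Q (ft_comp T f a) (ft_comp T g b)"
    "ft_hom T Q P h1" "ft_eq Q (ft_comp T p h1) a" "ft_eq Q (ft_comp T q h1) b"
    "ft_hom T Q P h2" "ft_eq Q (ft_comp T p h2) a" "ft_eq Q (ft_comp T q h2) b"
  shows "ft_eq Q h1 h2"
proof -
  obtain h where h: "\<forall>h'. ft_hom T Q P h' \<and> ft_eq Q (ft_comp T p h') a \<and> ft_eq Q (ft_comp T q h') b
                 \<longrightarrow> ft_eq Q h h'"
    using assms(1-5) unfolding is_pullback_def by blast
  have "ft_eq Q h h1" "ft_eq Q h h2" using h assms(6-11) by blast+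
  then show ?thesis unfolding ft_eq_def by auto
qed

lemma res_star:
  assumes c: "is_category T" and r: "is_res T u U V S R" and S: "S = [(W,w)]" and w: "isoV T W V w"
  shows "\<exists>X x. R = [(X,x)] \<and> isoV T X U x"
proof -
  obtain w' where w': "w \<in> cHom T W V" "w' \<in> cHom T V W" "cComp T w w' = cId T V" "cComp T w' w = cId T W"
    using w unfolding isoV_def by blast
  have u: "u \<in> cHom T U V" and oR: "sl_obj T U R" using r unfolding is_res_def by auto
  obtain q where pb: "is_pullback T [W] [U] [V] (sl_str S) (\<lambda>_. 0, \<lambda>_. u) (map fst R) q (sl_str R)"
    using r S unfolding is_res_def by auto
  define P where "P = map fst R"
  have pq: "ft_hom T P [W] q" "ft_hom T P [U] (sl_str R)"
     "ft_eq P (ft_comp T (sl_str S) q) (ft_comp T (\<lambda>_. 0, \<lambda>_. u) (sl_str R))" "ft_obj T P"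
    using pb unfolding is_pullback_def P_def by auto
  have rR: "snd (R!i) \<in> cHom T (P!i) U" if "i < length P" for i
    using oR that unfolding sl_obj_def P_def by (auto dest: nth_mem)
  have qi: "fst q i = 0" "snd q i \<in> cHom T (P!i) W" if "i < length P" for i
    using pq(1) that unfolding ft_hom_def by auto
  have comm: "cComp T w (snd q i) = cComp T u (snd (R!i))" if "i < length P" for i
    using pq(3) that qi[OF that] S unfolding ft_eq_def ft_comp_def sl_str_def by auto
  have oU: "U \<in> cOb T" "V \<in> cOb T" using cat_dom[OF c u] by auto
  have wu: "cComp T w' u \<in> cHom T U W" using cat_comp[OF c u w'(2)] .
  have a1: "ft_obj T [U]" "ft_hom T [U] [W] (\<lambda>_. 0, \<lambda>_. cComp T w' u)"
    "ft_hom T [U] [U] (\<lambda>_. 0, \<lambda>_. cId T U)"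
    using oU wu cat_id[OF c] unfolding ft_obj_def ft_hom_def by auto
  have "cComp T w (cComp T w' u) = u"
    using cat_assoc[OF c u w'(2) w'(1)] w'(3) cat_idl[OF c u] by simp
  then have a2: "ft_eq [U] (ft_comp T (sl_str S) (\<lambda>_. 0, \<lambda>_. cComp T w' u)) (ft_comp T (\<lambda>_. 0, \<lambda>_. u) (\<lambda>_. 0, \<lambda>_. cId T U))"
    unfolding ft_eq_def ft_comp_def sl_str_def using S cat_idr[OF c u] by simp
  obtain h where h: "ft_hom T [U] P h" "ft_eq [U] (ft_comp T q h) (\<lambda>_. 0, \<lambda>_. cComp T w' u)"
     "ft_eq [U] (ft_comp T (sl_str R) h) (\<lambda>_. 0, \<lambda>_. cId T U)"
    using pb a1 a2 unfolding is_pullback_def P_def by blast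
  define j where "j = fst h 0"
  define h0 where "h0 = snd h 0"
  have j: "j < length P" "h0 \<in> cHom T U (P!j)" using h(1) unfolding ft_hom_def j_def h0_def by auto
  have hq: "cComp T (snd q j) h0 = cComp T w' u" using h(2) unfolding ft_eq_def ft_comp_def j_def h0_def by auto
  have hr: "cComp T (snd (R!j)) h0 = cId T U" using h(3) unfolding ft_eq_def ft_comp_def sl_str_def j_def h0_def by auto
  have main: "i = j \<and> cComp T h0 (snd (R!i)) = cId T (P!i)" if i: "i < length P" for i
  proof -
    have ri: "snd (R!i) \<in> cHom T (P!i) U" using rR[OF i] .
    have oi: "P!i \<in> cOb T" using cat_dom[OF c ri] by simp
    have b1: "ft_obj T [P!i]" "ft_hom T [P!i] [W] (\<lambda>_. 0, \<lambda>_. snd q i)"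
      "ft_hom T [P!i] [U] (\<lambda>_. 0, \<lambda>_. snd (R!i))"
      using oi qi[OF i] ri unfolding ft_obj_def ft_hom_def by auto
    have b2: "ft_eq [P!i] (ft_comp T (sl_str S) (\<lambda>_. 0, \<lambda>_. snd q i)) (ft_comp T (\<lambda>_. 0, \<lambda>_. u) (\<lambda>_. 0, \<lambda>_. snd (R!i)))"
      unfolding ft_eq_def ft_comp_def sl_str_def using S comm[OF i] by simp
    have c1: "ft_hom T [P!i] P (\<lambda>_. i, \<lambda>_. cId T (P!i))"
      "ft_eq [P!i] (ft_comp T q (\<lambda>_. i, \<lambda>_. cId T (P!i))) (\<lambda>_. 0, \<lambda>_. snd q i)"
      "ft_eq [P!i] (ft_comp T (sl_str R) (\<lambda>_. i, \<lambda>_. cId T (P!i))) (\<lambda>_. 0, \<lambda>_. snd (R!i))"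
      using i cat_id[OF c oi] qi[OF i] cat_idr[OF c qi(2)[OF i]] cat_idr[OF c ri]
      unfolding ft_hom_def ft_eq_def ft_comp_def sl_str_def by auto
    have hri: "cComp T h0 (snd (R!i)) \<in> cHom T (P!i) (P!j)" using cat_comp[OF c ri j(2)] .
    have "cComp T (snd q j) (cComp T h0 (snd (R!i))) = cComp T (cComp T w' u) (snd (R!i))"
      using cat_assoc[OF c ri j(2) qi(2)[OF j(1)]] hq by simp
    also have "\<dots> = cComp T w' (cComp T u (snd (R!i)))"
      using cat_assoc[OF c ri u w'(2)] by simp
    also have "\<dots> = cComp T w' (cComp T w (snd q i))" using comm[OF i] by simp
    also have "\<dots> = snd q i"
      using cat_assoc[OF c qi(2)[OF i] w'(1) w'(2)] w'(4) cat_idl[OF c qi(2)[OF i]] by simp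
    finally have e1: "cComp T (snd q j) (cComp T h0 (snd (R!i))) = snd q i" .
    have "cComp T (snd (R!j)) (cComp T h0 (snd (R!i))) = snd (R!i)"
      using cat_assoc[OF c ri j(2) rR[OF j(1)]] hr cat_idl[OF c ri] by simp
    then have c2: "ft_hom T [P!i] P (\<lambda>_. j, \<lambda>_. cComp T h0 (snd (R!i)))"
      "ft_eq [P!i] (ft_comp T q (\<lambda>_. j, \<lambda>_. cComp T h0 (snd (R!i)))) (\<lambda>_. 0, \<lambda>_. snd q i)"
      "ft_eq [P!i] (ft_comp T (sl_str R) (\<lambda>_. j, \<lambda>_. cComp T h0 (snd (R!i)))) (\<lambda>_. 0, \<lambda>_. snd (R!i))"
      using j hri e1 qi(1)[OF j(1)]
      unfolding ft_hom_def ft_eq_def ft_comp_def sl_str_def by auto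
    have "ft_eq [P!i] (\<lambda>_. i, \<lambda>_. cId T (P!i)) (\<lambda>_. j, \<lambda>_. cComp T h0 (snd (R!i)))"
      using pb_unique[OF pb[folded P_def] b1 b2 c1 c2] .
    then show ?thesis unfolding ft_eq_def by auto
  qed
  have "length P = 1"
  proof -
    have "length P > 0" using j(1) by linarith
    moreover have "\<not> length P \<ge> 2"
    proof
      assume "length P \<ge> 2" then have "0 < length P" "1 < length P" by auto
      then show False using main[of 0] main[of 1] by auto
    qed
    ultimately show ?thesis by linarith
  qed
  then have lR: "length R = 1" unfolding P_def by simp
  then obtain X x where R: "R = [(X,x)]"
    by (metis (no_types, opaque_lifting) One_nat_def length_0_conv length_Suc_conv old.prod.exhaust)
  have j0: "j = 0" using j(1) \<open>length P = 1\<close> by simp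
  have PX: "P!0 = X" unfolding P_def R by simp
  have "isoV T X U x" unfolding isoV_def
    using rR[of 0] j main[of 0] hr \<open>length P = 1\<close> R PX j0 by auto
  then show ?thesis using R by blast
qed

lemma EF_mem:
  assumes c: "is_category T"
  shows "S \<in> EF T F V \<longleftrightarrow> V \<in> F \<and> (S = [] \<or> (\<exists>U u. S = [(U,u)] \<and> isoV T U V u))"
  unfolding EF_def by (simp add: sl_iso_nil sl_iso_star[OF c])

lemma isoV_comp:
  assumes c: "is_category T" and "isoV T X W x" "isoV T W V w"
  shows "isoV T X V (cComp T w x)"
proof -
  obtain x' where x: "x \<in> cHom T X W" "x' \<in> cHom T W X" "cComp T x x' = cId T W" "cComp T x' x = cId T X"
    using assms(2) unfolding isoV_def by blast
  obtain w' where w: "w \<in> cHom T W V" "w' \<in> cHom T V W" "cComp T w w' = cId T V" "cComp T w' w = cId T W"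
    using assms(3) unfolding isoV_def by blast
  have "cComp T (cComp T w x) (cComp T x' w') = cComp T w (cComp T (cComp T x x') w')"
    using cat_assoc[OF c w(2) x(2) x(1)] cat_assoc[OF c cat_comp[OF c w(2) x(2)] x(1) w(1)] by simp
  also have "\<dots> = cId T V" using x(3) cat_idl[OF c w(2)] w(3) by simp
  finally have 1: "cComp T (cComp T w x) (cComp T x' w') = cId T V" .
  have "cComp T (cComp T x' w') (cComp T w x) = cComp T x' (cComp T (cComp T w' w) x)"
    using cat_assoc[OF c x(1) w(1) w(2)] cat_assoc[OF c cat_comp[OF c x(1) w(1)] w(2) x(2)] by simp
  also have "\<dots> = cId T X" using w(4) cat_idl[OF c x(1)] x(4) by simp
  finally have 2: "cComp T (cComp T x' w') (cComp T w x) = cId T X" .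
  show ?thesis unfolding isoV_def using 1 2 cat_comp[OF c x(1) w(1)] cat_comp[OF c w(2) x(2)] by blast
qed

lemma res_nil:
  assumes "is_res T u U V [] R" shows "R = []"
proof -
  obtain q where "ft_hom T (map fst R) [] q"
    using assms unfolding is_res_def is_pullback_def list.map(1) by blast
  then show ?thesis unfolding ft_hom_def by (cases R) auto
qed

lemma res_nil_exists:
  assumes "f \<in> cHom T V W" shows "is_res T f V W [] []"
  unfolding is_res_def is_pullback_def sl_obj_def ft_obj_def ft_hom_def ft_eq_def
  using assms by auto

lemma EF_wIndSys:
  assumes c: "is_category T" and F: "family T F"
  shows "wIndSys T (EF T F)"
proof -
  have FO: "F \<subseteq> cOb T" and Fd: "\<And>V W f. f \<in> cHom T V W \<Longrightarrow> W \<in> F \<Longrightarrow> V \<in> F"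
    using F unfolding family_def by blast+
  have fs1: "\<forall>V. V \<notin> cOb T \<longrightarrow> EF T F V = {}" using FO unfolding EF_def by auto
  have fs2: "\<forall>V\<in>cOb T. \<forall>S\<in>EF T F V. sl_obj T V S"
  proof (intro ballI)
    fix V S assume "S \<in> EF T F V"
    then have "sl_iso T V S [] \<or> sl_iso T V S [(V, cId T V)]" unfolding EF_def by (simp split: if_splits)
    then show "sl_obj T V S" unfolding sl_iso_def by blast
  qed
  have fs3: "\<forall>V\<in>cOb T. \<forall>S S'. S \<in> EF T F V \<and> sl_iso T V S S' \<longrightarrow> S' \<in> EF T F V"
  proof (intro ballI allI impI, elim conjE)
    fix V S S' assume S: "S \<in> EF T F V" and i: "sl_iso T V S S'"
    have V: "V \<in> F" using S unfolding EF_def by (auto split: if_splits)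
    then have "sl_iso T V S [] \<or> sl_iso T V S [(V, cId T V)]" using S unfolding EF_def by simp
    then have "sl_iso T V S' [] \<or> sl_iso T V S' [(V, cId T V)]"
      using sl_iso_trans[OF c sl_iso_sym[OF i]] by blast
    then show "S' \<in> EF T F V" using V unfolding EF_def by simp
  qed
  have fs4: "\<forall>U V u S R. is_res T u U V S R \<and> S \<in> EF T F V \<longrightarrow> R \<in> EF T F U"
  proof (intro allI impI)
    fix U V u S R assume H: "is_res T u U V S R \<and> S \<in> EF T F V"
    have r: "is_res T u U V S R" and S: "S \<in> EF T F V" using H by simp_all
    have u: "u \<in> cHom T U V" using r unfolding is_res_def by auto
    have V: "V \<in> F" and SS: "S = [] \<or> (\<exists>W w. S = [(W,w)] \<and> isoV T W V w)"
      using S unfolding EF_mem[OF c] by (simp_all only:)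
    have U: "U \<in> F" using Fd[OF u V] .
    show "R \<in> EF T F U"
    proof (cases "S = []")
      case True then have "is_res T u U V [] R" using r by (simp only:)
      then have "R = []" by (rule res_nil)
      then show ?thesis using U unfolding EF_mem[OF c] by simp
    next
      case False then obtain W w where "S = [(W,w)]" "isoV T W V w" using SS by blast
      then have "\<exists>X x. R = [(X,x)] \<and> isoV T X U x" using res_star[OF c r] by blast
      then show ?thesis using U unfolding EF_mem[OF c] by simp
    qed
  qed
  have un: "\<forall>V\<in>cOb T. EF T F V \<noteq> {} \<longrightarrow> [(V, cId T V)] \<in> EF T F V"
  proof (intro ballI impI)
    fix V assume V: "V \<in> cOb T" "EF T F V \<noteq> {}"
    then have "V \<in> F" unfolding EF_def by (auto split: if_splits)
    moreover have "isoV T V V (cId T V)" unfolding isoV_def using cat_id[OF c V(1)] cat_idl[OF c] by blast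
    ultimately show "[(V, cId T V)] \<in> EF T F V" using EF_mem[OF c] by blast
  qed
  have ic: "\<forall>V\<in>cOb T. \<forall>S Ts. S \<in> EF T F V \<and> (\<forall>i<length S. Ts i \<in> EF T F (fst (S!i))) \<longrightarrow> indcoprod T S Ts \<in> EF T F V"
  proof (intro ballI allI impI, elim conjE)
    fix V S Ts assume S: "S \<in> EF T F V" and Ts: "\<forall>i<length S. Ts i \<in> EF T F (fst (S!i))"
    have V: "V \<in> F" and SS: "S = [] \<or> (\<exists>W w. S = [(W,w)] \<and> isoV T W V w)" using S EF_mem[OF c] by auto
    show "indcoprod T S Ts \<in> EF T F V"
    proof (cases "S = []")
      case True then show ?thesis using V EF_mem[OF c] by (simp add: indcoprod_def)
    next
      case False then obtain W w where Sw: "S = [(W,w)]" "isoV T W V w" using SS by blast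
      have "Ts 0 \<in> EF T F W" using Ts Sw by auto
      then have "Ts 0 = [] \<or> (\<exists>X x. Ts 0 = [(X,x)] \<and> isoV T X W x)" using EF_mem[OF c] by auto
      moreover have "indcoprod T S Ts = map (\<lambda>x. (fst x, cComp T w (snd x))) (Ts 0)"
        using Sw by (simp add: indcoprod_def)
      ultimately show ?thesis
      proof (elim disjE exE conjE)
        assume "Ts 0 = []" "indcoprod T S Ts = map (\<lambda>x. (fst x, cComp T w (snd x))) (Ts 0)"
        then show ?thesis using V EF_mem[OF c] by simp
      next
        fix X x assume "Ts 0 = [(X,x)]" "isoV T X W x" "indcoprod T S Ts = map (\<lambda>x. (fst x, cComp T w (snd x))) (Ts 0)"
        then show ?thesis using V EF_mem[OF c] isoV_comp[OF c _ Sw(2)] by simp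
      qed
    qed
  qed
  show ?thesis unfolding wIndSys_def full_sub_def by (intro conjI fs1 fs2 fs3 fs4 un ic)
qed

theorem mainTheorem13:
  fixes T :: "('o,'m) cat"
  assumes "orbital T"
  shows "(\<forall>C. wIndSys T C \<longrightarrow> family T (upsilon T C))
    \<and> (\<forall>C C'. wIndSys T C \<and> wIndSys T C' \<and> C \<le> C' \<longrightarrow> upsilon T C \<subseteq> upsilon T C')
    \<and> (\<forall>F. family T F \<longrightarrow> wIndSys T (EF T F))
    \<and> (\<forall>F F'. family T F \<and> family T F' \<and> F \<subseteq> F' \<longrightarrow> EF T F \<le> EF T F')
    \<and> (\<forall>F C. family T F \<and> wIndSys T C \<longrightarrow> (EF T F \<le> C \<longleftrightarrow> F \<subseteq> upsilon T C))
    \<and> (\<forall>F F'. family T F \<and> family T F' \<and> EF T F \<le> EF T F' \<longrightarrow> F \<subseteq> F')"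
proof -
  have c: "is_category T" using assms unfolding orbital_def by blast
  have nilEF: "[] \<in> EF T F V" if "V \<in> F" for F V using that EF_mem[OF c] by blast
  have p1: "\<forall>C. wIndSys T C \<longrightarrow> family T (upsilon T C)"
  proof (intro allI impI)
    fix C assume w: "wIndSys T C"
    have "V \<in> upsilon T C" if f: "f \<in> cHom T V W" and W: "W \<in> upsilon T C" for V W f
    proof -
      have "[] \<in> C W" using W unfolding upsilon_def by auto
      then have "[] \<in> C V" using w res_nil_exists[OF f] unfolding wIndSys_def full_sub_def by blast
      then show ?thesis using cat_dom[OF c f] unfolding upsilon_def by auto
    qed
    then show "family T (upsilon T C)" unfolding family_def upsilon_def by blast
  qed
  have p2: "\<forall>C C'. wIndSys T C \<and> wIndSys T C' \<and> C \<le> C' \<longrightarrow> upsilon T C \<subseteq> upsilon T C'"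
    unfolding upsilon_def le_fun_def by blast
  have p3: "\<forall>F. family T F \<longrightarrow> wIndSys T (EF T F)" using EF_wIndSys[OF c] by blast
  have p4: "\<forall>F F'. family T F \<and> family T F' \<and> F \<subseteq> F' \<longrightarrow> EF T F \<le> EF T F'"
    unfolding le_fun_def EF_def by auto
  have p5: "\<forall>F C. family T F \<and> wIndSys T C \<longrightarrow> (EF T F \<le> C \<longleftrightarrow> F \<subseteq> upsilon T C)"
  proof (intro allI impI iffI, elim conjE)
    fix F C assume F: "family T F" and w: "wIndSys T C" and le: "EF T F \<le> C"
    show "F \<subseteq> upsilon T C"
    proof
      fix V assume V: "V \<in> F"
      then have "[] \<in> C V" using nilEF le unfolding le_fun_def by blast
      moreover have "V \<in> cOb T" using F V unfolding family_def by blast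
      ultimately show "V \<in> upsilon T C" unfolding upsilon_def by blast
    qed
  next
    fix F C assume FC: "family T F \<and> wIndSys T C" and sub: "F \<subseteq> upsilon T C"
    have w: "wIndSys T C" using FC by blast
    have iso: "\<And>V S S'. V \<in> cOb T \<Longrightarrow> S \<in> C V \<Longrightarrow> sl_iso T V S S' \<Longrightarrow> S' \<in> C V"
      using w unfolding wIndSys_def full_sub_def by blast
    have unit: "\<And>V. V \<in> cOb T \<Longrightarrow> C V \<noteq> {} \<Longrightarrow> [(V, cId T V)] \<in> C V"
      using w unfolding wIndSys_def by blast
    show "EF T F \<le> C" unfolding le_fun_def
    proof (intro allI subsetI)
      fix V S assume S: "S \<in> EF T F V"
      then have V: "V \<in> F" unfolding EF_def by (auto split: if_splits)
      then have V0: "V \<in> cOb T" "[] \<in> C V" using sub unfolding upsilon_def by auto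
      have "sl_iso T V S [] \<or> sl_iso T V S [(V, cId T V)]" using S V unfolding EF_def by auto
      then show "S \<in> C V"
      proof
        assume "sl_iso T V S []" then show ?thesis using iso[OF V0(1) V0(2) sl_iso_sym] by blast
      next
        assume "sl_iso T V S [(V, cId T V)]"
        moreover have "[(V, cId T V)] \<in> C V" using unit V0 by blast
        ultimately show ?thesis using iso[OF V0(1) _ sl_iso_sym] by blast
      qed
    qed
  qed
  have p6: "\<forall>F F'. family T F \<and> family T F' \<and> EF T F \<le> EF T F' \<longrightarrow> F \<subseteq> F'"
  proof (intro allI impI subsetI, elim conjE)
    fix F F' V assume le: "EF T F \<le> EF T F'" and V: "V \<in> F"
    then have "[] \<in> EF T F' V" using nilEF unfolding le_fun_def by blast
    then show "V \<in> F'" unfolding EF_def by (auto split: if_splits)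
  qed
  show ?thesis using p1 p2 p3 p4 p5 p6 by blast
qed

end
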